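(* Let $s\ge1$ and let $a_{ij}$ ($i,j=1,\dots,s$) be scalars satisfying \[ a_{ij}a_{ik} - a_{ij}a_{jk} - a_{ik}a_{kj} = 0\qquad\text{for all } i,j,k\in\{1,\dots,s\}\text{ with } j\neq k. \] Then: (a) for all $i\neq j$, if $a_{ij}\neq0$ then $a_{ji}=0$; (b) for all $i,j,k$, if $a_{ik}\neq0$ and $a_{kj}\neq0$, then $a_{ij}\neq0$. *)

theory Defs
  imports Main
begin

end

theory Submission
  imports Defs
begin

theorem lemma2p4:
  fixes s :: nat and a :: "nat \<Rightarrow> nat \<Rightarrow> 'f::field"
  assumes "s \<ge> 1"
    and rel: "\<And>i j k. i \<in> {1..s} \<Longrightarrow> j \<in> {1..s} \<Longrightarrow> k \<in> {1..s} \<Longrightarrow> j \<noteq> k \<Longrightarrow>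
              a i j * a i k - a i j * a j k - a i k * a k j = 0"
  shows "(\<forall>i\<in>{1..s}. \<forall>j\<in>{1..s}. i \<noteq> j \<longrightarrow> a i j \<noteq> 0 \<longrightarrow> a j i = 0)
       \<and> (\<forall>i\<in>{1..s}. \<forall>j\<in>{1..s}. \<forall>k\<in>{1..s}. a i k \<noteq> 0 \<longrightarrow> a k j \<noteq> 0 \<longrightarrow> a i j \<noteq> 0)"
proof -
  have A: "a j i = 0" if "i \<in> {1..s}" "j \<in> {1..s}" "i \<noteq> j" "a i j \<noteq> 0" for i j
  proof -
    have "a i j * a i i - a i j * a j i - a i i * a i j = 0"
      using rel[of i j i] that by auto
    hence "a i j * a j i = 0" by (simp add: algebra_simps)
    thus ?thesis using that by simp
  qed
  have B: "a i j \<noteq> 0" if "i \<in> {1..s}" "j \<in> {1..s}" "k \<in> {1..s}" "a i k \<noteq> 0" "a k j \<noteq> 0" for i j k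
  proof (cases "j = k")
    case True thus ?thesis using that by simp
  next
    case False
    show ?thesis
    proof
      assume h: "a i j = 0"
      have "a i j * a i k - a i j * a j k - a i k * a k j = 0"
        using rel[of i j k] that False by auto
      hence "a i k * a k j = 0" using h by simp
      thus False using that by simp
    qed
  qed
  show ?thesis using A B by blast
qed

end
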